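(* Let $k_1>k_2>0$ be integers and $p=\frac{k_1}{k_1+k_2}$. Then, as $t\to\infty$ through the positive integers, $$\lim_{t\to\infty}\sum_{i=0}^\infty\binom{tk_1+tk_2+2i}{tk_1+i}p^{tk_1+i}(1-p)^{tk_2+i}=\frac{1/4}{p-\frac12}.$$ *)

theory Defs
  imports "HOL-Analysis.Analysis"
begin

end

theory Submission
  imports Defs "HOL-Real_Asymp.Real_Asymp"
begin

lemma central_choose_rec:
  "((2*Suc j) choose Suc j) * Suc j = 2 * (2*j+1) * ((2*j) choose j)"
proof -
  have a: "Suc (2*j+1) * ((2*j+1) choose j) = (Suc (2*j+1) choose Suc j) * Suc j"
    by (rule Suc_times_binomial_eq)
  have b: "Suc (2*j) * ((2*j) choose j) = (Suc (2*j) choose Suc j) * Suc j"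
    by (rule Suc_times_binomial_eq)
  have c: "(Suc (2*j) choose Suc j) = ((2*j+1) choose j)"
    using binomial_symmetric[of j "Suc (2*j)"] by simp
  have e1: "Suc (2*j+1) = 2*Suc j" by simp
  have a': "((2*Suc j) choose Suc j) * Suc j = 2 * Suc j * ((2*j+1) choose j)"
    by (metis a e1)
  have b': "((2*j+1) choose j) * Suc j = (2*j+1) * ((2*j) choose j)"
    by (metis b c Suc_eq_plus1)
  have "((2*Suc j) choose Suc j) * Suc j * Suc j = 2 * Suc j * (((2*j+1) choose j) * Suc j)"
    by (metis a' mult.assoc)
  also have "... = Suc j * (2 * (2*j+1) * ((2*j) choose j))" unfolding b' by (simp only: ac_simps)
  finally have "Suc j * (((2*Suc j) choose Suc j) * Suc j) = Suc j * (2 * (2*j+1) * ((2*j) choose j))"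
    by (simp only: ac_simps)
  then show ?thesis by (metis nat.distinct(1) mult_left_cancel)
qed

lemma gchoose_minus_half:
  "((-1/2::real) gchoose j) * (-4)^j = real ((2*j) choose j)"
proof (induction j)
  case 0
  then show ?case by simp
next
  case (Suc j)
  have e: "real ((2*Suc j) choose Suc j) * (real j + 1) = real ((2*j) choose j) * (4 * real j + 2)"
    using arg_cong[OF central_choose_rec[of j], of real] by (simp add: algebra_simps)
  have m: "(-4::real)*(-1/2 - real j) = 4*real j + 2" by simp
  have "((-1/2::real) gchoose Suc j) * (-4)^Suc j
        = (((-1/2::real) gchoose j) * (-4)^j) * ((-4) * (-1/2 - real j) / (real j + 1))"
    unfolding gbinomial_Suc_rec power_Suc by (simp only: mult_ac times_divide_eq_right times_divide_eq_left)
  also have "... = (((-1/2::real) gchoose j) * (-4)^j) * ((4*real j + 2)/(real j + 1))"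
    by (simp only: m)
  also have "... = real ((2*j) choose j) * (4 * real j + 2) / (real j + 1)"
    by (simp only: Suc.IH times_divide_eq_right)
  also have "... = real ((2*Suc j) choose Suc j)"
    using e by (simp add: field_simps)
  finally show ?case .
qed

lemma central_binomial_series:
  fixes x :: real assumes "0 \<le> x" "x < 1/4"
  shows "(\<lambda>j. real ((2*j) choose j) * x^j) sums (1 / sqrt (1 - 4*x))"
proof -
  have "\<bar>-4*x\<bar> < 1" using assms by simp
  from gen_binomial_real[OF this, of "-1/2"]
  have "(\<lambda>j. ((-1/2) gchoose j) * (-4*x)^j) sums ((1 + -4*x) powr (-1/2))" .
  moreover have "((-1/2) gchoose j) * (-4*x)^j = real ((2*j) choose j) * x^j" for j
  proof -
    have "(-4*x)^j = (-4)^j * x^j" by (rule power_mult_distrib)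
    then show ?thesis using gchoose_minus_half[of j] by (simp add: mult.assoc[symmetric])
  qed
  moreover have "(1 + -4*x) powr (-1/2) = 1 / sqrt (1 - 4*x)"
    using assms by (simp add: powr_minus_divide powr_half_sqrt)
  ultimately show ?thesis by simp
qed

definition cc :: "real \<Rightarrow> nat \<Rightarrow> nat \<Rightarrow> real" where
  "cc p d j = real ((2*j+d) choose j) * p^(j+d) * (1-p)^j"

lemma cc_summable:
  assumes "1/2 < p" "p < 1"
  shows "summable (cc p d)"
proof (rule summable_comparison_test')
  have "4*p*(1-p) < 1"
  proof -
    have "0 < (2*p-1)^2" using assms by simp
    then show ?thesis by (simp add: power2_eq_square algebra_simps)
  qed
  moreover have "0 \<le> 4*p*(1-p)" using assms by simp
  ultimately show "summable (\<lambda>j. (2*p)^d * (4*p*(1-p))^j)"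
    by (intro summable_mult summable_geometric) simp
next
  fix j
  have "real ((2*j+d) choose j) \<le> 2^(2*j+d)"
    using binomial_le_pow2[of "2*j+d" j] by (metis of_nat_le_iff of_nat_numeral of_nat_power)
  hence "real ((2*j+d) choose j) * (p^(j+d) * (1-p)^j) \<le> 2^(2*j+d) * (p^(j+d) * (1-p)^j)"
    using assms by (intro mult_right_mono) auto
  also have "2^(2*j+d) * (p^(j+d) * (1-p)^j) = (2*p)^d * (4*p*(1-p))^j"
    by (simp add: power_add power_mult_distrib power_mult)
  finally show "norm (cc p d j) \<le> (2*p)^d * (4*p*(1-p))^j"
    using assms by (simp add: cc_def mult.assoc)
qed

lemma cc_0:
  assumes "1/2 < p" "p < 1"
  shows "cc p 0 sums (1/(2*p-1))"
proof -
  have "0 < (2*p-1)^2" using assms by simp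
  then have x: "0 \<le> p*(1-p)" "p*(1-p) < 1/4"
    using assms by (simp, simp add: power2_eq_square algebra_simps)
  have "1 - 4*(p*(1-p)) = (2*p-1)^2" by (simp add: power2_eq_square algebra_simps)
  hence "sqrt (1 - 4*(p*(1-p))) = 2*p-1" using assms by simp
  moreover have "cc p 0 = (\<lambda>j. real ((2*j) choose j) * (p*(1-p))^j)"
    by (simp add: fun_eq_iff cc_def power_mult_distrib)
  ultimately show ?thesis using central_binomial_series[OF x] by simp
qed


lemma central_choose_Suc: "(2*Suc j choose Suc j) = 2 * ((2*j+1) choose j)"
proof -
  have "2*Suc j = Suc (2*j+1)" by simp
  hence "(2*Suc j choose Suc j) = ((2*j+1) choose j) + ((2*j+1) choose Suc j)"
    by (simp only: binomial_Suc_Suc)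
  moreover have "((2*j+1) choose Suc j) = ((2*j+1) choose j)"
    using binomial_symmetric[of j "2*j+1"] by simp
  ultimately show ?thesis by simp
qed

lemma cc_1:
  assumes "1/2 < p" "p < 1"
  shows "cc p 1 sums (1/(2*p-1))"
proof -
  define e where "e = cc p 0"
  have e0: "e 0 = 1" by (simp add: e_def cc_def)
  have "(\<lambda>j. e (Suc j)) sums (1/(2*p-1) - e 0)"
    using cc_0[OF assms] sums_Suc_iff[of e] unfolding e_def by simp
  hence "(\<lambda>j. e (Suc j) / (2*(1-p))) sums ((1/(2*p-1) - 1) / (2*(1-p)))"
    unfolding e0 by (rule sums_divide)
  moreover have "(1/(2*p-1) - 1) / (2*(1-p)) = 1/(2*p-1)"
  proof -
    have "1/(2*p-1) - 1 = 2*(1-p)/(2*p-1)" using assms by (simp add: field_simps)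
    then show ?thesis using assms by simp
  qed
  moreover have "(\<lambda>j. e (Suc j) / (2*(1-p))) = cc p 1"
  proof
    fix j
    have "e (Suc j) = 2 * real ((2*j+1) choose j) * p^(Suc j) * (1-p)^(Suc j)"
      unfolding e_def cc_def by (simp only: add_0_right central_choose_Suc of_nat_mult)
    then show "e (Suc j) / (2*(1-p)) = cc p 1 j"
      using assms by (simp add: cc_def field_simps)
  qed
  ultimately show ?thesis by simp
qed

lemma cc_rec:
  "cc p (Suc d) j = p * cc p d j + (if j = 0 then 0 else (1-p) * cc p (d+2) (j-1))"
proof (cases j)
  case 0
  then show ?thesis by (simp add: cc_def)
next
  case (Suc i)
  have "(2*j + Suc d) choose j = ((2*j+d) choose i) + ((2*j+d) choose j)"
    using Suc by (simp add: binomial_Suc_Suc)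
  moreover have "2*i + (d+2) = 2*j+d" using Suc by simp
  ultimately show ?thesis using Suc by (simp add: cc_def algebra_simps)
qed


lemma cc_rec_suminf:
  assumes "1/2 < p" "p < 1"
  shows "suminf (cc p (Suc d)) = p * suminf (cc p d) + (1-p) * suminf (cc p (d+2))"
proof -
  define h where "h j = (if j = 0 then 0 else (1-p) * cc p (d+2) (j-1))" for j
  have "(\<lambda>j. h (Suc j)) sums ((1-p) * suminf (cc p (d+2)))"
    unfolding h_def using cc_summable[OF assms, of "d+2"]
    by (simp add: summable_sums sums_mult)
  hence hs: "h sums ((1-p) * suminf (cc p (d+2)))"
    using sums_Suc_iff[of h] by (simp add: h_def)
  have "(\<lambda>j. p * cc p d j + h j) sums (p * suminf (cc p d) + (1-p) * suminf (cc p (d+2)))"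
    using cc_summable[OF assms, of d] hs by (intro sums_add sums_mult) (auto simp: summable_sums)
  moreover have "(\<lambda>j. p * cc p d j + h j) = cc p (Suc d)"
    by (simp add: fun_eq_iff h_def cc_rec)
  ultimately show ?thesis by (simp add: sums_iff)
qed

lemma cc_sums:
  assumes "1/2 < p" "p < 1"
  shows "cc p d sums (1/(2*p-1))"
proof -
  obtain v where v: "v = 1/(2*p-1)" by simp
  have "suminf (cc p d) = v \<and> suminf (cc p (Suc d)) = v"
  proof (induction d)
    case 0
    then show ?case using cc_0[OF assms] cc_1[OF assms] v by (simp add: sums_iff)
  next
    case (Suc d)
    have A: "suminf (cc p d) = v" and B: "suminf (cc p (Suc d)) = v" using Suc.IH by auto
    have "suminf (cc p (Suc d)) = p * suminf (cc p d) + (1-p) * suminf (cc p (d+2))"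
      by (rule cc_rec_suminf[OF assms])
    hence "v = p * v + (1-p) * suminf (cc p (d+2))"
      by (simp only: A B)
    hence "(1-p) * suminf (cc p (d+2)) = (1-p) * v"
      by (simp add: algebra_simps)
    hence "suminf (cc p (d+2)) = v" using assms by simp
    then show ?case using B by simp
  qed
  then have "suminf (cc p d) = 1/(2*p-1)" using v by simp
  then show ?thesis using cc_summable[OF assms, of d] by (simp add: summable_sums_iff)
qed

definition Bn :: "real \<Rightarrow> nat \<Rightarrow> nat \<Rightarrow> real" where
  "Bn p n k = real (n choose k) * p^k * (1-p)^(n-k)"

lemma vdm_nat:
  fixes a b i :: nat
  shows "((a + b + 2*i) choose (a+i)) =
    (\<Sum>k\<le>a+b. if a \<le> k + i \<and> k \<le> a + i then ((a+b) choose k) * ((2*i) choose (a+i-k)) else 0)"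
proof -
  define f where "f k = ((a+b) choose k) * ((2*i) choose (a+i-k))" for k
  define S where "S = {k. k \<le> a+b \<and> k \<le> a+i \<and> a \<le> k+i}"
  have "((a + b + 2*i) choose (a+i)) = (\<Sum>k\<le>a+i. f k)"
    using vandermonde[of "a+b" "2*i" "a+i"] by (simp add: f_def)
  also have "... = (\<Sum>k\<in>S. f k)"
  proof (rule sum.mono_neutral_right)
    show "finite {..a+i}" by simp
    show "S \<subseteq> {..a+i}" by (auto simp: S_def)
    show "\<forall>k\<in>{..a+i} - S. f k = 0"
    proof
      fix k assume k: "k \<in> {..a+i} - S"
      show "f k = 0"
      proof (cases "k \<le> a+b")
        case True
        with k have "a > k + i" by (auto simp: S_def)
        then have "2*i < a+i-k" by simp
        then show ?thesis by (simp add: f_def)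
      next
        case False
        then show ?thesis by (simp add: f_def)
      qed
    qed
  qed
  also have "... = (\<Sum>k\<le>a+b. if a \<le> k + i \<and> k \<le> a + i then f k else 0)"
  proof -
    have "{..a+b} \<inter> {k. a \<le> k + i \<and> k \<le> a + i} = S" by (auto simp: S_def)
    then show ?thesis
      using sum.inter_restrict[of "{..a+b}" f "{k. a \<le> k + i \<and> k \<le> a + i}"] by simp
  qed
  finally show ?thesis by (simp only: f_def)
qed

lemma vdm_decomp:
  assumes "1/2 < p" "p < 1"
  shows "(\<lambda>i. real ((a + b + 2*i) choose (a+i)) * p^(a+i) * (1-p)^(b+i)) sums
     (\<Sum>k\<le>a+b. Bn p (a+b) k * ((if k \<le> a then 1 else ((1-p)/p)^(2*(k-a))) / (2*p-1)))"
proof -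
  define T where "T i k = (if a \<le> k + i \<and> k \<le> a + i then
      real ((a+b) choose k) * real ((2*i) choose (a+i-k)) * p^(a+i) * (1-p)^(b+i) else 0)" for i k
  have tm: "real ((a + b + 2*i) choose (a+i)) * p^(a+i) * (1-p)^(b+i) = (\<Sum>k\<le>a+b. T i k)" for i
    unfolding vdm_nat[of a b i] T_def of_nat_sum sum_distrib_right
    by (intro sum.cong) auto
  have each: "(\<lambda>i. T i k) sums (Bn p (a+b) k * ((if k \<le> a then 1 else ((1-p)/p)^(2*(k-a))) / (2*p-1)))"
    if k: "k \<in> {..a+b}" for k
  proof (cases "k \<le> a")
    case True
    then obtain e where ae: "a = k + e" using le_Suc_ex by blast
    have z: "T i k = 0" if "i < e" for i using that ae by (simp add: T_def)
    have "(\<lambda>j. T (j + e) k) = (\<lambda>j. Bn p (a+b) k * cc p (2*e) j)"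
    proof
      fix j
      have c: "((2*(j+e)) choose (j + 2*e)) = ((2*j + 2*e) choose j)"
        using binomial_symmetric[of j "2*j+2*e"] by (simp add: algebra_simps)
      have i1: "a + (j+e) - k = j + 2*e" using ae by simp
      have i2: "(a \<le> k + (j+e) \<and> k \<le> a + (j+e)) = True" using ae by simp
      have i3: "a + (j+e) = k+2*e+j" "b + (j+e) = b+j+e" using ae by simp_all
      have "T (j+e) k = real ((a+b) choose k) * real ((2*(j+e)) choose (j + 2*e)) * p^(a+(j+e)) * (1-p)^(b+(j+e))"
        unfolding T_def i1 i2 if_True ..
      also have "... = real ((a+b) choose k) * real ((2*j + 2*e) choose j) * p^(k+2*e+j) * (1-p)^(b+j+e)"
        unfolding c i3 ..
      finally have "T (j+e) k = real ((a+b) choose k) * real ((2*j + 2*e) choose j) * p^(k+2*e+j) * (1-p)^(b+j+e)" .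
      also have "... = Bn p (a+b) k * cc p (2*e) j"
        unfolding Bn_def cc_def ae
        by (simp add: power_add algebra_simps)
      finally show "T (j + e) k = Bn p (a+b) k * cc p (2*e) j" .
    qed
    moreover have "(\<lambda>j. Bn p (a+b) k * cc p (2*e) j) sums (Bn p (a+b) k * (1/(2*p-1)))"
      by (intro sums_mult cc_sums assms)
    ultimately have "(\<lambda>j. T (j + e) k) sums (Bn p (a+b) k * (1/(2*p-1)))" by simp
    then have "(\<lambda>i. T i k) sums (Bn p (a+b) k * (1/(2*p-1)))"
      using sums_zero_iff_shift[of e "\<lambda>i. T i k"] z by simp
    then show ?thesis using True by simp
  next
    case False
    then obtain e where ae: "k = a + e" and e0: "e > 0"
      by (metis add_diff_inverse_nat less_imp_add_positive not_le)
    from k ae obtain b' where bb: "b = e + b'"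
      using le_Suc_ex by auto
    have z: "T i k = 0" if "i < e" for i using that ae by (simp add: T_def)
    have "(\<lambda>j. T (j + e) k) = (\<lambda>j. Bn p (a+b) k * ((1-p)/p)^(2*e) * cc p (2*e) j)"
    proof
      fix j
      have "T (j+e) k = real ((a+b) choose k) * real ((2*j + 2*e) choose j) * p^(a+j+e) * (1-p)^(b'+2*e+j)"
        unfolding T_def ae bb by (simp add: algebra_simps mult_2 mult_2_right)
      also have "... = Bn p (a+b) k * ((1-p)/p)^(2*e) * cc p (2*e) j"
        unfolding Bn_def cc_def ae bb using assms
        by (simp add: power_add power_divide algebra_simps)
      finally show "T (j + e) k = Bn p (a+b) k * ((1-p)/p)^(2*e) * cc p (2*e) j" .
    qed
    moreover have "(\<lambda>j. Bn p (a+b) k * ((1-p)/p)^(2*e) * cc p (2*e) j) sums (Bn p (a+b) k * ((1-p)/p)^(2*e) * (1/(2*p-1)))"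
      by (intro sums_mult cc_sums assms)
    ultimately have "(\<lambda>j. T (j + e) k) sums (Bn p (a+b) k * ((1-p)/p)^(2*e) * (1/(2*p-1)))" by simp
    then have "(\<lambda>i. T i k) sums (Bn p (a+b) k * ((1-p)/p)^(2*e) * (1/(2*p-1)))"
      using sums_zero_iff_shift[of e "\<lambda>i. T i k"] z by simp
    then show ?thesis using False ae by simp
  qed
  have "(\<lambda>i. \<Sum>k\<le>a+b. T i k) sums
     (\<Sum>k\<le>a+b. Bn p (a+b) k * ((if k \<le> a then 1 else ((1-p)/p)^(2*(k-a))) / (2*p-1)))"
    by (rule sums_sum) (rule each)
  then show ?thesis unfolding tm .
qed

lemma Bn_sum: "(\<Sum>k\<le>n. Bn p n k) = 1"
  using binomial_ring[of p "1-p" n] by (simp add: Bn_def atLeast0AtMost mult_ac)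

lemma Bn_nonneg: "0 \<le> p \<Longrightarrow> p \<le> 1 \<Longrightarrow> 0 \<le> Bn p n k"
  by (simp add: Bn_def)

lemma Bn_mean: "(\<Sum>k\<le>n. real k * Bn p n k) = real n * p"
proof (cases n)
  case 0
  then show ?thesis by simp
next
  case (Suc m)
  have "(\<Sum>k\<le>Suc m. real k * Bn p (Suc m) k) = (\<Sum>i\<le>m. real (Suc i) * Bn p (Suc m) (Suc i))"
    by (subst sum.atMost_Suc_shift) simp
  also have "... = (\<Sum>i\<le>m. (real (Suc m) * p) * Bn p m i)"
  proof (rule sum.cong)
    fix i assume "i \<in> {..m}"
    have "real (Suc i) * real (Suc m choose Suc i) = real (Suc m) * real (m choose i)"
      by (simp only: of_nat_mult[symmetric] Suc_times_binomial)
    note h = this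
    have "real (Suc i) * Bn p (Suc m) (Suc i) = (real (Suc i) * real (Suc m choose Suc i)) * p^Suc i * (1-p)^(m-i)"
      by (simp del: binomial_Suc_Suc of_nat_Suc add: Bn_def mult.assoc)
    also have "... = (real (Suc m) * p) * Bn p m i"
      unfolding h by (simp del: of_nat_Suc add: Bn_def mult_ac)
    finally show "real (Suc i) * Bn p (Suc m) (Suc i) = (real (Suc m) * p) * Bn p m i" .
  qed simp
  also have "... = real (Suc m) * p"
    by (simp add: sum_distrib_left[symmetric] Bn_sum)
  finally show ?thesis using Suc by simp
qed

lemma Bn_fact2: "(\<Sum>k\<le>n. real k * (real k - 1) * Bn p n k) = real n * (real n - 1) * p^2"
proof (cases n)
  case 0
  then show ?thesis by simp
next
  case (Suc m)
  have "(\<Sum>k\<le>Suc m. real k * (real k - 1) * Bn p (Suc m) k) =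
        (\<Sum>i\<le>m. real (Suc i) * real i * Bn p (Suc m) (Suc i))"
    by (subst sum.atMost_Suc_shift) simp
  also have "... = (\<Sum>i\<le>m. (real (Suc m) * p) * (real i * Bn p m i))"
  proof (rule sum.cong)
    fix i assume "i \<in> {..m}"
    have "real (Suc i) * real (Suc m choose Suc i) = real (Suc m) * real (m choose i)"
      by (simp only: of_nat_mult[symmetric] Suc_times_binomial)
    note h = this
    have "real (Suc i) * real i * Bn p (Suc m) (Suc i) = real i * ((real (Suc i) * real (Suc m choose Suc i)) * p^Suc i * (1-p)^(m-i))"
      by (simp del: binomial_Suc_Suc of_nat_Suc add: Bn_def mult_ac)
    also have "... = (real (Suc m) * p) * (real i * Bn p m i)"
      unfolding h by (simp del: of_nat_Suc add: Bn_def mult_ac)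
    finally show "real (Suc i) * real i * Bn p (Suc m) (Suc i) = (real (Suc m) * p) * (real i * Bn p m i)" .
  qed simp
  also have "... = real (Suc m) * p * (real m * p)"
    by (simp add: sum_distrib_left[symmetric] Bn_mean)
  finally show ?thesis using Suc by (simp add: power2_eq_square algebra_simps)
qed

lemma Bn_var: "(\<Sum>k\<le>n. Bn p n k * (real k - real n * p)^2) = real n * p * (1-p)"
proof -
  have "(\<Sum>k\<le>n. Bn p n k * (real k - real n * p)^2) =
    (\<Sum>k\<le>n. real k * (real k - 1) * Bn p n k) + (1 - 2 * real n * p) * (\<Sum>k\<le>n. real k * Bn p n k)
      + (real n * p)^2 * (\<Sum>k\<le>n. Bn p n k)"
    by (simp add: sum_distrib_left sum.distrib[symmetric] power2_eq_square algebra_simps)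
  also have "... = real n * p * (1-p)"
    unfolding Bn_fact2 Bn_mean Bn_sum by (simp add: power2_eq_square algebra_simps)
  finally show ?thesis .
qed

lemma Bn_tail:
  assumes "0 \<le> p" "p \<le> 1" "K > 0"
  shows "(\<Sum>k\<le>n. if K < \<bar>real k - real n * p\<bar> then Bn p n k else 0) \<le> real n * p * (1-p) / K^2"
proof -
  have "(\<Sum>k\<le>n. if K < \<bar>real k - real n * p\<bar> then Bn p n k else 0) \<le>
        (\<Sum>k\<le>n. Bn p n k * (real k - real n * p)^2 / K^2)"
  proof (rule sum_mono)
    fix k
    show "(if K < \<bar>real k - real n * p\<bar> then Bn p n k else 0) \<le> Bn p n k * (real k - real n * p)^2 / K^2"
    proof (cases "K < \<bar>real k - real n * p\<bar>")
      case True
      have "K^2 \<le> (real k - real n * p)^2"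
        using True assms by (metis abs_le_square_iff abs_of_pos less_imp_le)
      hence "1 \<le> (real k - real n * p)^2 / K^2" using assms by simp
      hence "Bn p n k * 1 \<le> Bn p n k * ((real k - real n * p)^2 / K^2)"
        using Bn_nonneg[OF assms(1,2)] by (intro mult_left_mono) auto
      then show ?thesis using True by simp
    next
      case False
      then show ?thesis using Bn_nonneg[OF assms(1,2)] by simp
    qed
  qed
  also have "... = real n * p * (1-p) / K^2"
    by (simp add: sum_divide_distrib[symmetric] Bn_var)
  finally show ?thesis .
qed

lemma ratio_induct:
  fixes f g :: "nat \<Rightarrow> real"
  assumes v: "v \<ge> 0" and f: "\<And>k. k \<le> K \<Longrightarrow> f k \<ge> 0" and g: "\<And>k. k \<le> K \<Longrightarrow> g k > 0"
    and f0: "f 0 \<ge> g 0"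
    and st: "\<And>k. k < K \<Longrightarrow> f (Suc k) * g k \<ge> (1-v) * f k * g (Suc k)"
  shows "k \<le> K \<Longrightarrow> f k \<ge> (1 - real k * v) * g k"
proof (induction k)
  case 0
  then show ?case using f0 by simp
next
  case (Suc k)
  have gk: "g k > 0" and gk1: "g (Suc k) > 0" using g Suc.prems by auto
  have IH: "f k \<ge> (1 - real k * v) * g k" using Suc by simp
  show ?case
  proof (cases "1 - real (Suc k) * v \<le> 0")
    case True
    have "(1 - real (Suc k) * v) * g (Suc k) \<le> 0" using True gk1 by (simp add: mult_nonpos_nonneg)
    then show ?thesis using f[OF Suc.prems] by linarith
  next
    case False
    have a1: "real k * v \<le> real (Suc k) * v" using v by (intro mult_right_mono) auto
    have a2: "v \<le> real (Suc k) * v" using v by (simp add: algebra_simps)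
    have v1: "1 - v \<ge> 0" using False a2 by linarith
    have vk: "1 - real k * v \<ge> 0" using False a1 by linarith
    have "f (Suc k) * g k \<ge> (1-v) * f k * g (Suc k)" using st Suc.prems by simp
    also have "(1-v) * f k * g (Suc k) \<ge> (1-v) * ((1 - real k * v) * g k) * g (Suc k)"
      using IH v1 gk1 by (intro mult_right_mono mult_left_mono) auto
    finally have A: "f (Suc k) * g k \<ge> ((1-v) * (1 - real k * v)) * (g (Suc k) * g k)"
      by (simp only: mult_ac)
    have C: "(1-v) * (1 - real k * v) \<ge> 1 - real (Suc k) * v"
      using v by (simp add: algebra_simps)
    have "(1 - real (Suc k) * v) * (g (Suc k) * g k) \<le> ((1-v) * (1 - real k * v)) * (g (Suc k) * g k)"
      using C gk gk1 by (intro mult_right_mono) auto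
    with A have "((1 - real (Suc k) * v) * g (Suc k)) * g k \<le> f (Suc k) * g k"
      by (simp only: mult.assoc)
    then show ?thesis by (rule mult_right_le_imp_le[OF _ gk])
  qed
qed

lemma P3:
  fixes a b k K :: real
  assumes "0 < b" "b < a" "0 \<le> k" "k + 1 \<le> K"
  shows "(b-k)*a \<ge> (1 - 2*K/b)*(a+k+1)*b"
proof -
  have e: "(1 - 2*K/b)*(a+k+1)*b = (a+k+1)*b - 2*K*(a+k+1)" using assms by (simp add: field_simps)
  have "(k+1)*b \<le> (k+1)*a" using assms by (intro mult_left_mono) auto
  moreover have "(k+1)*a \<le> K*a" using assms by (intro mult_right_mono) auto
  moreover have "k*a \<le> K*a" using assms by (intro mult_right_mono) auto
  moreover have "0 \<le> K*(k+1)" using assms by simp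
  ultimately show ?thesis unfolding e by (simp add: algebra_simps)
qed

lemma P1:
  fixes a b k K :: real
  assumes b0: "0 < b" and ba: "b < a" and k0: "0 \<le> k" and kK: "k + 1 \<le> K" and Kb: "K \<le> b"
  shows "(b-k)*(b+k+1)*a^2 \<ge> (1 - (K^2/b^2 + 2/b))*(a+k+1)*(a-k)*b^2"
proof -
  define X where "X = 1 - (K^2/b^2 + 2/b)"
  have L0: "(b-k)*(b+k+1)*a^2 \<ge> 0" using assms by simp
  have "k*(k+1) \<le> K*K" using assms by (intro mult_mono) auto
  hence kk: "k*(k+1) \<le> K^2" by (simp add: power2_eq_square)
  have "(b-k)*(b+k+1)*a^2 \<ge> X*((a+k+1)*(a-k)*b^2)"
  proof (cases "X \<le> 0")
    case True
    have "(a+k+1)*(a-k)*b^2 \<ge> 0" using assms by simp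
    hence "X*((a+k+1)*(a-k)*b^2) \<le> 0" using True by (simp add: mult_nonpos_nonneg)
    then show ?thesis using L0 by linarith
  next
    case False
    have h1: "(a+k+1)*(a-k) \<le> a^2 + a" using assms by (simp add: algebra_simps power2_eq_square)
    have s1: "X*((a+k+1)*(a-k)*b^2) \<le> X*((a^2+a)*b^2)"
      using False h1 by (intro mult_left_mono mult_right_mono) auto
    have h2: "(a^2+a)*b^2 \<le> a^2*(b^2+b)"
    proof -
      have "a*b^2 \<le> a^2*b" using assms by (simp add: power2_eq_square)
      then show ?thesis by (simp add: algebra_simps)
    qed
    have s2: "X*((a^2+a)*b^2) \<le> X*(a^2*(b^2+b))" using False h2 by (intro mult_left_mono) auto
    have h3: "X*(b^2+b) = b^2 + b - K^2 - K^2/b - 2*b - 2"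
      unfolding X_def using b0 by (simp add: field_simps power2_eq_square)
    have h4: "K^2/b \<ge> 0" using b0 by simp
    have h5: "X*(b^2+b) \<le> b^2 - k*(k+1)" using h3 h4 kk b0 by linarith
    have s3: "a^2*(X*(b^2+b)) \<le> a^2*(b^2 - k*(k+1))"
      using h5 by (intro mult_left_mono) auto
    have s4: "a^2*(b^2 - k*(k+1)) \<le> (b-k)*(b+k+1)*a^2"
      using assms by (simp add: algebra_simps power2_eq_square)
    have e: "X*(a^2*(b^2+b)) = a^2*(X*(b^2+b))" by (simp only: mult_ac)
    show ?thesis using s1 s2 s3 s4 e by linarith
  qed
  then show ?thesis unfolding X_def by (simp only: mult.assoc)
qed

lemma P2:
  fixes a b k K :: real
  assumes b0: "0 < b" and ba: "b < a" and k0: "0 \<le> k" and kK: "k + 1 \<le> K" and Kb: "K \<le> b"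
  shows "(a-k)*(a+k+1)*b^2 \<ge> (1 - (K^2/b^2 + 2/b))*(b+k+1)*(b-k)*a^2"
proof -
  define X where "X = 1 - (K^2/b^2 + 2/b)"
  have L0: "(a-k)*(a+k+1)*b^2 \<ge> 0" using assms by simp
  have "k*(k+1) \<le> K*K" using assms by (intro mult_mono) auto
  hence kk: "k*(k+1) \<le> K^2" by (simp add: power2_eq_square)
  have "(a-k)*(a+k+1)*b^2 \<ge> X*((b+k+1)*(b-k)*a^2)"
  proof (cases "X \<le> 0")
    case True
    have "(b+k+1)*(b-k)*a^2 \<ge> 0" using assms by simp
    hence "X*((b+k+1)*(b-k)*a^2) \<le> 0" using True by (simp add: mult_nonpos_nonneg)
    then show ?thesis using L0 by linarith
  next
    case False
    have h1: "(b+k+1)*(b-k) \<le> b^2 + b" using assms by (simp add: algebra_simps power2_eq_square)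
    have s1: "X*((b+k+1)*(b-k)*a^2) \<le> X*((b^2+b)*a^2)"
      using False h1 by (intro mult_left_mono mult_right_mono) auto
    have e: "X*((b^2+b)*a^2) = a^2*(X*(b^2+b))" by (simp only: mult_ac)
    have h3: "X*(b^2+b) = b^2 + b - K^2 - K^2/b - 2*b - 2"
      unfolding X_def using b0 by (simp add: field_simps power2_eq_square)
    have h4: "K^2/b \<ge> 0" using b0 by simp
    have h5: "X*(b^2+b) \<le> b^2 - K^2" using h3 h4 b0 by linarith
    have s3: "a^2*(X*(b^2+b)) \<le> a^2*(b^2 - K^2)"
      using h5 by (intro mult_left_mono) auto
    have s4: "a^2*(b^2 - K^2) \<le> (a^2 - k*(k+1))*b^2"
    proof -
      have "b^2 \<le> a^2" using assms by (simp add: power_mono)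
      have "k*(k+1)*b^2 \<le> K^2*a^2" using kk \<open>b^2 \<le> a^2\<close> assms
        by (intro mult_mono) auto
      then show ?thesis by (simp add: algebra_simps)
    qed
    have s5: "(a^2 - k*(k+1))*b^2 \<le> (a-k)*(a+k+1)*b^2"
      using assms by (intro mult_right_mono) (auto simp: algebra_simps power2_eq_square)
    show ?thesis using s1 e s3 s4 s5 by linarith
  qed
  then show ?thesis unfolding X_def by (simp only: mult.assoc)
qed

locale bs = fixes a b :: nat assumes b0: "0 < b" and ba: "b < a"
begin

definition pp :: real where "pp = real a / real (a+b)"
definition B :: "nat \<Rightarrow> real" where "B j = Bn pp (a+b) j"

lemma pp_props: "0 < pp" "pp < 1" "1 - pp = real b / real (a+b)" "real (a+b) * pp = real a" "1/2 < pp"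
proof -
  have n0: "real (a+b) > 0" using b0 by simp
  show "0 < pp" using ba b0 by (simp add: pp_def)
  show "pp < 1" using b0 by (simp add: pp_def)
  show "1 - pp = real b / real (a+b)" using n0 by (simp add: pp_def field_simps)
  show "real (a+b) * pp = real a" using n0 by (simp add: pp_def)
  show "1/2 < pp" using n0 ba by (simp add: pp_def field_simps)
qed

lemma B_pos: "j \<le> a+b \<Longrightarrow> 0 < B j"
  using pp_props by (simp add: B_def Bn_def)

lemma B_nonneg: "0 \<le> B j"
  using pp_props by (simp add: B_def Bn_def)

lemma B_zero: "a+b < j \<Longrightarrow> B j = 0"
  by (simp add: B_def Bn_def)

lemma B_sum: "(\<Sum>j\<le>a+b. B j) = 1"
  unfolding B_def by (rule Bn_sum)

lemma choose_step: "(n choose Suc j) * Suc j = (n choose j) * (n - j)"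
  using binomial_absorption[of j n] binomial_absorb_comp[of n j] by (simp add: mult_ac)

lemma B_step:
  assumes "j < a+b"
  shows "B (Suc j) * real (Suc j) * real b = B j * real (a+b-j) * real a"
proof -
  obtain m where m: "a+b-j = Suc m" using assms by (metis Suc_diff_Suc)
  hence m': "a+b - Suc j = m" by simp
  have c: "real ((a+b) choose Suc j) * real (Suc j) = real ((a+b) choose j) * real (a+b-j)"
    by (metis choose_step of_nat_mult)
  have pq: "pp * real b = (1-pp) * real a"
    using pp_props(3) pp_def by simp
  have "B (Suc j) * real (Suc j) * real b =
        (real ((a+b) choose Suc j) * real (Suc j)) * pp^j * (1-pp)^m * (pp * real b)"
    unfolding B_def Bn_def m' by (simp del: of_nat_Suc binomial_Suc_Suc add: mult_ac)
  also have "... = real ((a+b) choose j) * real (a+b-j) * pp^j * (1-pp)^m * ((1-pp) * real a)"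
    unfolding c pq ..
  also have "... = B j * real (a+b-j) * real a"
    unfolding B_def Bn_def m by (simp add: mult_ac)
  finally show ?thesis .
qed

lemma B_up:
  assumes "k < b"
  shows "B (a + Suc k) * (real a + real k + 1) * real b = B (a+k) * (real b - real k) * real a"
proof -
  have "B (Suc (a+k)) * real (Suc (a+k)) * real b = B (a+k) * real (a+b-(a+k)) * real a"
    using assms by (intro B_step) simp
  moreover have "real (a+b-(a+k)) = real b - real k" using assms by simp
  ultimately show ?thesis by (simp add: algebra_simps)
qed

lemma B_down:
  assumes "k < a"
  shows "B (a - k) * (real a - real k) * real b = B (a - Suc k) * (real b + real k + 1) * real a"
proof -
  have e1: "Suc (a - Suc k) = a - k" using assms by simp
  have "B (Suc (a - Suc k)) * real (Suc (a - Suc k)) * real b = B (a - Suc k) * real (a+b-(a - Suc k)) * real a"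
    using assms by (intro B_step) simp
  moreover have "real (a+b-(a - Suc k)) = real b + real k + 1" using assms by simp
  moreover have "real (Suc (a - Suc k)) = real a - real k" using assms by simp
  ultimately show ?thesis unfolding e1 by simp
qed


lemma sym1:
  assumes K1: "1 \<le> K" and Kb: "K \<le> b" and kK: "k \<le> K"
  shows "B (a+k) \<ge> (1 - real k * (real K^2/real b^2 + 2/real b)) * B (a-k)"
proof (rule ratio_induct[where f="\<lambda>k. B (a+k)" and g="\<lambda>k. B (a-k)" and K=K, OF _ _ _ _ _ kK])
  show "0 \<le> real K^2/real b^2 + 2/real b" by simp
  show "\<And>k. k \<le> K \<Longrightarrow> 0 \<le> B (a+k)" by (rule B_nonneg)
  show "\<And>k. k \<le> K \<Longrightarrow> 0 < B (a-k)" by (rule B_pos) simp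
  show "B (a+0) \<ge> B (a-0)" by simp
next
  fix k assume k: "k < K"
  define v where "v = real K^2/real b^2 + 2/real b"
  have kb: "k < b" and ka: "k < a" using k Kb ba by auto
  have u: "B (a + Suc k) * (real a + real k + 1) * real b = B (a+k) * (real b - real k) * real a"
    using B_up[OF kb] .
  have d: "B (a - k) * (real a - real k) * real b = B (a - Suc k) * (real b + real k + 1) * real a"
    using B_down[OF ka] .
  have P: "(real b - real k)*(real b + real k + 1)*real a^2 \<ge> (1 - v)*(real a + real k + 1)*(real a - real k)*real b^2"
    unfolding v_def using b0 ba k Kb by (intro P1) auto
  define D where "D = (real a + real k + 1)*(real a - real k)*real b^2"
  have D0: "D > 0" unfolding D_def using ka b0 by simp
  have "B (a + Suc k) * B (a - k) * D = (B (a + Suc k) * (real a + real k + 1) * real b) * (B (a - k) * (real a - real k) * real b)"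
    unfolding D_def by (simp add: power2_eq_square mult_ac)
  also have "... = B (a+k) * B (a - Suc k) * ((real b - real k)*(real b + real k + 1)*real a^2)"
    unfolding u d by (simp add: power2_eq_square mult_ac)
  also have "... \<ge> B (a+k) * B (a - Suc k) * ((1 - v) * D)"
    using P B_nonneg unfolding D_def by (intro mult_left_mono) (auto simp: mult_ac)
  finally have "((1 - v) * B (a+k) * B (a - Suc k)) * D \<le> (B (a + Suc k) * B (a - k)) * D"
    by (simp add: mult_ac)
  hence "(1 - v) * B (a+k) * B (a - Suc k) \<le> B (a + Suc k) * B (a - k)"
    using D0 by (rule mult_right_le_imp_le)
  then show "(1 - v) * B (a+k) * B (a - Suc k) \<le> B (a + Suc k) * B (a - k)" .
qed

lemma sym2:
  assumes K1: "1 \<le> K" and Kb: "K \<le> b" and kK: "k \<le> K"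
  shows "B (a-k) \<ge> (1 - real k * (real K^2/real b^2 + 2/real b)) * B (a+k)"
proof (rule ratio_induct[where f="\<lambda>k. B (a-k)" and g="\<lambda>k. B (a+k)" and K=K, OF _ _ _ _ _ kK])
  show "0 \<le> real K^2/real b^2 + 2/real b" by simp
  show "\<And>k. k \<le> K \<Longrightarrow> 0 \<le> B (a-k)" by (rule B_nonneg)
  show "\<And>k. k \<le> K \<Longrightarrow> 0 < B (a+k)" using Kb by (intro B_pos) simp
  show "B (a-0) \<ge> B (a+0)" by simp
next
  fix k assume k: "k < K"
  define v where "v = real K^2/real b^2 + 2/real b"
  have kb: "k < b" and ka: "k < a" using k Kb ba by auto
  have u: "B (a + Suc k) * (real a + real k + 1) * real b = B (a+k) * (real b - real k) * real a"
    using B_up[OF kb] .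
  have d: "B (a - k) * (real a - real k) * real b = B (a - Suc k) * (real b + real k + 1) * real a"
    using B_down[OF ka] .
  have P: "(real a - real k)*(real a + real k + 1)*real b^2 \<ge> (1 - v)*(real b + real k + 1)*(real b - real k)*real a^2"
    unfolding v_def using b0 ba k Kb by (intro P2) auto
  define D where "D = (real b + real k + 1)*(real b - real k)*real a^2"
  have D0: "D > 0" unfolding D_def using kb ba by simp
  have "B (a - Suc k) * B (a + k) * D = (B (a - Suc k) * (real b + real k + 1) * real a) * (B (a + k) * (real b - real k) * real a)"
    unfolding D_def by (simp add: power2_eq_square mult_ac)
  also have "... = B (a-k) * B (a + Suc k) * ((real a - real k)*(real a + real k + 1)*real b^2)"
    unfolding u[symmetric] d[symmetric] by (simp add: power2_eq_square mult_ac)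
  also have "... \<ge> B (a-k) * B (a + Suc k) * ((1 - v) * D)"
    using P B_nonneg unfolding D_def by (intro mult_left_mono) (auto simp: mult_ac)
  finally have "((1 - v) * B (a-k) * B (a + Suc k)) * D \<le> (B (a - Suc k) * B (a + k)) * D"
    by (simp add: mult_ac)
  hence "(1 - v) * B (a-k) * B (a + Suc k) \<le> B (a - Suc k) * B (a + k)"
    using D0 by (rule mult_right_le_imp_le)
  then show "(1 - v) * B (a-k) * B (a + Suc k) \<le> B (a - Suc k) * B (a + k)" .
qed

lemma mode_lower:
  assumes Kb: "K \<le> b" and kK: "k \<le> K"
  shows "B (a+k) \<ge> (1 - real k * (2*real K/real b)) * B a"
proof (rule ratio_induct[where f="\<lambda>k. B (a+k)" and g="\<lambda>k. B a" and K=K, OF _ _ _ _ _ kK])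
  show "0 \<le> 2*real K/real b" by simp
  show "\<And>k. k \<le> K \<Longrightarrow> 0 \<le> B (a+k)" by (rule B_nonneg)
  show "\<And>k. k \<le> K \<Longrightarrow> 0 < B a" by (rule B_pos) simp
  show "B (a+0) \<ge> B a" by simp
next
  fix k assume k: "k < K"
  define w where "w = 2*real K/real b"
  have kb: "k < b" using k Kb by auto
  have u: "B (a + Suc k) * (real a + real k + 1) * real b = B (a+k) * (real b - real k) * real a"
    using B_up[OF kb] .
  have P: "(real b - real k)*real a \<ge> (1 - w)*(real a + real k + 1)*real b"
    unfolding w_def using b0 ba k by (intro P3) auto
  define D where "D = (real a + real k + 1) * real b"
  have D0: "D > 0" unfolding D_def using b0 by simp
  have "B (a + Suc k) * D = B (a+k) * ((real b - real k) * real a)"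
    using u unfolding D_def by (simp add: mult_ac)
  also have "... \<ge> B (a+k) * ((1-w) * D)"
    using P B_nonneg unfolding D_def by (intro mult_left_mono) (auto simp: mult_ac)
  finally have "((1-w) * B (a+k)) * D \<le> B (a + Suc k) * D" by (simp add: mult_ac)
  hence "(1-w) * B (a+k) \<le> B (a + Suc k)" using D0 by (rule mult_right_le_imp_le)
  then show "(1 - w) * B (a+k) * B a \<le> B (a + Suc k) * B a"
    using B_nonneg[of a] by (intro mult_right_mono) auto
qed

lemma B_mono_up: "B (a + Suc k) \<le> B (a+k)"
proof (cases "k < b")
  case True
  have u: "B (a + Suc k) * (real a + real k + 1) * real b = B (a+k) * (real b - real k) * real a"
    using B_up[OF True] .
  have "(real b - real k) * real a \<le> (real a + real k + 1) * real b"
    using ba by (simp add: algebra_simps)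
  hence "B (a+k) * ((real b - real k) * real a) \<le> B (a+k) * ((real a + real k + 1) * real b)"
    using B_nonneg by (intro mult_left_mono) auto
  hence "B (a + Suc k) * ((real a + real k + 1) * real b) \<le> B (a+k) * ((real a + real k + 1) * real b)"
    using u by (simp add: mult_ac)
  moreover have "(real a + real k + 1) * real b > 0" using b0 by simp
  ultimately show ?thesis by (rule mult_right_le_imp_le)
next
  case False
  then show ?thesis using B_zero[of "a + Suc k"] B_nonneg by simp
qed

lemma B_le_mode: "B (a+k) \<le> B a"
proof (induction k)
  case 0 then show ?case by simp
next
  case (Suc k) then show ?case using B_mono_up[of k] by simp
qed

end

lemma abs_half_helper: "2*(x::real) \<le> y \<Longrightarrow> -y \<le> 2*x \<Longrightarrow> \<bar>x\<bar> \<le> y/2"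
  by linarith

context bs begin

lemma B_le_1: "B j \<le> 1"
proof (cases "j \<le> a+b")
  case True
  have "B j \<le> (\<Sum>i\<le>a+b. B i)" using True B_nonneg by (intro member_le_sum) auto
  then show ?thesis using B_sum by simp
next
  case False then show ?thesis using B_zero by simp
qed

lemma sum_sub_le_1:
  assumes "S \<subseteq> {..a+b}"
  shows "(\<Sum>j\<in>S. B j) \<le> 1"
proof -
  have "(\<Sum>j\<in>S. B j) \<le> (\<Sum>j\<le>a+b. B j)"
    using assms B_nonneg by (intro sum_mono2) auto
  then show ?thesis using B_sum by simp
qed

lemma mode_bound:
  assumes K: "4 * K^2 \<le> b"
  shows "B a \<le> 2 / (real K + 1)"
proof (cases "K = 0")
  case True
  then show ?thesis using B_le_1[of a] by simp
next
  case False
  have "K \<le> K^2" using False by (simp add: power2_eq_square)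
  hence Kb: "K \<le> b" using K by linarith
  have K': "4 * real K^2 \<le> real b" using K by (metis of_nat_le_iff of_nat_mult of_nat_numeral of_nat_power)
  have each: "B a / 2 \<le> B (a+k)" if k: "k \<le> K" for k
  proof -
    have "real k * real K \<le> real K * real K" using k by (intro mult_right_mono) auto
    hence "2 * (real k * real K) \<le> real b / 2" using K' by (simp add: power2_eq_square)
    hence x: "real k * (2*real K/real b) \<le> 1/2" using b0 by (simp add: field_simps)
    have "(1/2) * B a \<le> (1 - real k * (2*real K/real b)) * B a"
      using x B_nonneg[of a] by (intro mult_right_mono) auto
    hence "B a / 2 \<le> (1 - real k * (2*real K/real b)) * B a" by simp
    also have "... \<le> B (a+k)" by (rule mode_lower[OF Kb k])
    finally show ?thesis .
  qed
  have "(real K + 1) * (B a / 2) = (\<Sum>k\<le>K. B a / 2)" by simp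
  also have "... \<le> (\<Sum>k\<le>K. B (a+k))" using each by (intro sum_mono) auto
  also have "... = (\<Sum>j\<in>(\<lambda>k. a+k) ` {..K}. B j)" by (simp add: sum.reindex)
  also have "... \<le> 1" using Kb by (intro sum_sub_le_1) auto
  finally have "(real K + 1) * B a \<le> 2" by simp
  then show ?thesis by (simp add: field_simps)
qed

definition Tail :: "nat \<Rightarrow> real" where
  "Tail K = (\<Sum>j\<le>a+b. if real K < \<bar>real j - real a\<bar> then B j else 0)"

lemma tail_le:
  assumes "S \<subseteq> {..a+b}" "\<And>j. j \<in> S \<Longrightarrow> real K < \<bar>real j - real a\<bar>"
  shows "(\<Sum>j\<in>S. B j) \<le> Tail K"
proof -
  have "(\<Sum>j\<in>S. B j) = (\<Sum>j\<in>S. if real K < \<bar>real j - real a\<bar> then B j else 0)"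
    using assms by (intro sum.cong) auto
  also have "... \<le> Tail K" unfolding Tail_def
    using assms B_nonneg by (intro sum_mono2) auto
  finally show ?thesis .
qed

lemma Tail_bound: "K > 0 \<Longrightarrow> Tail K \<le> real b / real K^2"
proof -
  assume K: "K > 0"
  have eq: "Tail K = (\<Sum>j\<le>a+b. if real K < \<bar>real j - real (a+b) * pp\<bar> then Bn pp (a+b) j else 0)"
    by (simp only: Tail_def B_def pp_props(4))
  have "Tail K \<le> real (a+b) * pp * (1-pp) / real K^2"
    unfolding eq using pp_props(1,2) K by (intro Bn_tail) auto
  also have "real (a+b) * pp * (1-pp) = real a * real b / real (a+b)"
    using pp_props(3,4) by simp
  also have "... \<le> real b"
    using b0 by (simp add: field_simps)
  finally show ?thesis using K by (simp add: divide_right_mono)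
qed


lemma total_split: "(\<Sum>j<a. B j) + B a + (\<Sum>j\<in>{a<..a+b}. B j) = 1"
proof -
  have e: "{..a+b} = ({..<a} \<union> {a}) \<union> {a<..a+b}" by auto
  have "(\<Sum>j\<le>a+b. B j) = (\<Sum>j\<in>{..<a} \<union> {a}. B j) + (\<Sum>j\<in>{a<..a+b}. B j)"
    unfolding e by (rule sum.union_disjoint) auto
  also have "(\<Sum>j\<in>{..<a} \<union> {a}. B j) = (\<Sum>j<a. B j) + B a"
    by (subst sum.union_disjoint) auto
  finally show ?thesis using B_sum by simp
qed

lemma sym_bound:
  assumes K1: "1 \<le> K" and Kb: "K \<le> b"
  shows "\<bar>(\<Sum>j<a. B j) + B a - 1/2\<bar> \<le>
           (real K * (real K^2/real b^2 + 2/real b) + Tail K + B a) / 2"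
proof -
  define v where "v = real K^2/real b^2 + 2/real b"
  define \<delta> where "\<delta> = real K * v"
  have v0: "v \<ge> 0" unfolding v_def by simp
  have d0: "\<delta> \<ge> 0" unfolding \<delta>_def using v0 by simp
  define U where "U = (\<Sum>k\<in>{1..K}. B (a+k))"
  define Lw where "Lw = (\<Sum>k\<in>{1..K}. B (a-k))"
  have kv: "1 - \<delta> \<le> 1 - real k * v" if "k \<in> {1..K}" for k
    using that v0 unfolding \<delta>_def by (simp add: mult_right_mono)
  have UL: "U \<ge> (1 - \<delta>) * Lw"
  proof -
    have "(1 - \<delta>) * Lw = (\<Sum>k\<in>{1..K}. (1 - \<delta>) * B (a-k))" unfolding Lw_def by (simp add: sum_distrib_left)
    also have "... \<le> U" unfolding U_def
    proof (rule sum_mono)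
      fix k assume k: "k \<in> {1..K}"
      have "(1 - \<delta>) * B (a-k) \<le> (1 - real k * v) * B (a-k)"
        using kv[OF k] B_nonneg by (intro mult_right_mono) auto
      also have "... \<le> B (a+k)" unfolding v_def using k by (intro sym1[OF K1 Kb]) auto
      finally show "(1 - \<delta>) * B (a-k) \<le> B (a+k)" .
    qed
    finally show ?thesis .
  qed
  have LU: "Lw \<ge> (1 - \<delta>) * U"
  proof -
    have "(1 - \<delta>) * U = (\<Sum>k\<in>{1..K}. (1 - \<delta>) * B (a+k))" unfolding U_def by (simp add: sum_distrib_left)
    also have "... \<le> Lw" unfolding Lw_def
    proof (rule sum_mono)
      fix k assume k: "k \<in> {1..K}"
      have "(1 - \<delta>) * B (a+k) \<le> (1 - real k * v) * B (a+k)"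
        using kv[OF k] B_nonneg by (intro mult_right_mono) auto
      also have "... \<le> B (a-k)" unfolding v_def using k by (intro sym2[OF K1 Kb]) auto
      finally show "(1 - \<delta>) * B (a+k) \<le> B (a-k)" .
    qed
    finally show ?thesis .
  qed
  have Ka: "K \<le> a" using Kb ba by simp
  have U_eq: "U = (\<Sum>j\<in>{a<..a+K}. B j)"
    unfolding U_def by (rule sum.reindex_bij_witness[of _ "\<lambda>j. j - a" "\<lambda>k. a + k"]) auto
  have L_eq: "Lw = (\<Sum>j\<in>{a-K..<a}. B j)"
    unfolding Lw_def using Ka by (intro sum.reindex_bij_witness[of _ "\<lambda>j. a - j" "\<lambda>k. a - k"]) auto
  define T1 where "T1 = (\<Sum>j\<in>{a+K<..a+b}. B j)"
  define T2 where "T2 = (\<Sum>j\<in>{..<a-K}. B j)"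
  have Pgt: "(\<Sum>j\<in>{a<..a+b}. B j) = U + T1"
  proof -
    have e: "{a<..a+b} = {a<..a+K} \<union> {a+K<..a+b}" using Kb by auto
    show ?thesis unfolding e U_eq T1_def by (rule sum.union_disjoint) auto
  qed
  have Plt: "(\<Sum>j<a. B j) = T2 + Lw"
  proof -
    have e: "{..<a} = {..<a-K} \<union> {a-K..<a}" by auto
    show ?thesis unfolding e L_eq T2_def by (rule sum.union_disjoint) auto
  qed
  have T1b: "T1 \<le> Tail K" unfolding T1_def by (rule tail_le) auto
  have T2b: "T2 \<le> Tail K" unfolding T2_def using Ka by (intro tail_le) auto
  have T1n: "T1 \<ge> 0" and T2n: "T2 \<ge> 0" unfolding T1_def T2_def using B_nonneg by (auto intro: sum_nonneg)
  have Un: "U \<ge> 0" and Ln: "Lw \<ge> 0" unfolding U_def Lw_def using B_nonneg by (auto intro: sum_nonneg)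
  have U1: "U \<le> 1" unfolding U_eq using Kb by (intro sum_sub_le_1) auto
  have L1: "Lw \<le> 1" unfolding L_eq by (rule sum_sub_le_1) auto
  have dU: "\<delta> * U \<le> \<delta>" using d0 U1 by (simp add: mult_left_le)
  have dL: "\<delta> * Lw \<le> \<delta>" using d0 L1 by (simp add: mult_left_le)
  have tot: "(\<Sum>j<a. B j) + B a + (\<Sum>j\<in>{a<..a+b}. B j) = 1" by (rule total_split)
  have "U \<ge> Lw - \<delta>" using UL dL by (simp add: algebra_simps)
  moreover have "Lw \<ge> U - \<delta>" using LU dU by (simp add: algebra_simps)
  moreover have e2: "2*((\<Sum>j<a. B j) + B a - 1/2) = T2 + Lw + B a - U - T1"
    using tot Pgt Plt by simp
  ultimately have h1: "2*((\<Sum>j<a. B j) + B a - 1/2) \<le> \<delta> + Tail K + B a"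
    using T1b T2b T1n T2n B_nonneg[of a] by linarith
  have h2: "-(\<delta> + Tail K + B a) \<le> 2*((\<Sum>j<a. B j) + B a - 1/2)"
    using e2 \<open>U \<ge> Lw - \<delta>\<close> \<open>Lw \<ge> U - \<delta>\<close> T1b T2b T1n T2n B_nonneg[of a] by linarith
  from h1 h2 have "\<bar>(\<Sum>j<a. B j) + B a - 1/2\<bar> \<le> (\<delta> + Tail K + B a) / 2"
    by (rule abs_half_helper)
  then show ?thesis unfolding \<delta>_def v_def .
qed


definition rho :: real where "rho = ((1-pp)/pp)^2"
definition Sec :: real where "Sec = (\<Sum>k\<in>{a<..a+b}. B k * rho^(k-a))"

lemma rho_props: "0 \<le> rho" "rho < 1"
proof -
  show "0 \<le> rho" unfolding rho_def by simp
  have "0 \<le> (1-pp)/pp" "(1-pp)/pp < 1" using pp_props by (auto simp: field_simps)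
  then show "rho < 1" unfolding rho_def by (simp add: power_less_one_iff abs_square_less_1)
qed

lemma split_main:
  "(\<Sum>k\<le>a+b. Bn pp (a+b) k * ((if k \<le> a then 1 else ((1-pp)/pp)^(2*(k-a))) / (2*pp-1)))
    = ((\<Sum>j<a. B j) + B a + Sec) / (2*pp-1)"
proof -
  define h where "h k = B k * (if k \<le> a then 1 else rho^(k-a))" for k
  have "(\<Sum>k\<le>a+b. Bn pp (a+b) k * ((if k \<le> a then 1 else ((1-pp)/pp)^(2*(k-a))) / (2*pp-1)))
        = (\<Sum>k\<le>a+b. h k) / (2*pp-1)"
    unfolding h_def B_def rho_def sum_divide_distrib by (intro sum.cong) (auto simp: power_mult)
  also have "(\<Sum>k\<le>a+b. h k) = (\<Sum>j<a. B j) + B a + Sec"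
  proof -
    have e: "{..a+b} = ({..<a} \<union> {a}) \<union> {a<..a+b}" by auto
    have "(\<Sum>k\<le>a+b. h k) = (\<Sum>k\<in>{..<a} \<union> {a}. h k) + (\<Sum>k\<in>{a<..a+b}. h k)"
      unfolding e by (rule sum.union_disjoint) auto
    also have "(\<Sum>k\<in>{..<a} \<union> {a}. h k) = (\<Sum>k<a. h k) + h a"
      by (subst sum.union_disjoint) auto
    also have "(\<Sum>k<a. h k) = (\<Sum>j<a. B j)" unfolding h_def by (intro sum.cong) auto
    also have "(\<Sum>k\<in>{a<..a+b}. h k) = Sec" unfolding h_def Sec_def by (intro sum.cong) auto
    finally show ?thesis by (simp add: h_def)
  qed
  finally show ?thesis .
qed

lemma Sec_bound: "0 \<le> Sec \<and> Sec \<le> B a / (1 - rho)"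
proof
  show "0 \<le> Sec" unfolding Sec_def using B_nonneg rho_props by (intro sum_nonneg) auto
  have "Sec \<le> (\<Sum>k\<in>{a<..a+b}. B a * rho^(k-a))"
    unfolding Sec_def
  proof (rule sum_mono)
    fix k assume k: "k \<in> {a<..a+b}"
    have "B k = B (a + (k-a))" using k by simp
    also have "... \<le> B a" by (rule B_le_mode)
    finally show "B k * rho^(k-a) \<le> B a * rho^(k-a)" using rho_props by (intro mult_right_mono) auto
  qed
  also have "... = B a * (\<Sum>i\<in>{1..b}. rho^i)"
    unfolding sum_distrib_left[symmetric]
    by (rule arg_cong[where f="\<lambda>x. B a * x"], rule sum.reindex_bij_witness[of _ "\<lambda>i. a + i" "\<lambda>k. k - a"]) auto
  also have "(\<Sum>i\<in>{1..b}. rho^i) \<le> (\<Sum>i. rho^i)"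
    using rho_props by (intro sum_le_suminf summable_geometric) auto
  also have "(\<Sum>i. rho^i) = 1 / (1 - rho)"
    using rho_props by (intro suminf_geometric) auto
  finally show "Sec \<le> B a / (1 - rho)"
    using B_nonneg[of a] by (simp add: mult_left_mono)
qed

end

lemma lin_helper:
  fixes x d T T' m M S S' :: real
  shows "\<bar>x\<bar> \<le> (d + T + m)/2 \<Longrightarrow> T \<le> T' \<Longrightarrow> m \<le> M \<Longrightarrow> S \<le> S' \<Longrightarrow> \<bar>x\<bar> + S \<le> (d + T' + M)/2 + S'"
  unfolding add_divide_distrib by linarith

lemma per_t:
  assumes b0: "0 < b" and ba: "b < a" and K1: "1 \<le> K" and Kb: "K \<le> b" and K': "4*K'^2 \<le> b"
  defines "p \<equiv> real a / real (a+b)"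
  shows "summable (\<lambda>i. real ((a + b + 2*i) choose (a+i)) * p^(a+i) * (1-p)^(b+i))"
    and "\<bar>(\<Sum>i. real ((a + b + 2*i) choose (a+i)) * p^(a+i) * (1-p)^(b+i)) - (1/4)/(p - 1/2)\<bar>
        \<le> ((real K * (real K^2/real b^2 + 2/real b) + real b/real K^2 + 2/(real K'+1))/2
             + (2/(real K'+1))/(1 - ((1-p)/p)^2)) / (2*p-1)"
proof -
  interpret bs a b using b0 ba by unfold_locales
  have pp: "p = pp" unfolding p_def pp_def ..
  have hp: "1/2 < pp" "pp < 1" using pp_props by auto
  define s where "s = ((\<Sum>j<a. B j) + B a + Sec) / (2*pp-1)"
  have sums: "(\<lambda>i. real ((a + b + 2*i) choose (a+i)) * p^(a+i) * (1-p)^(b+i)) sums s"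
    using vdm_decomp[OF hp, of a b] unfolding split_main s_def pp .
  then show "summable (\<lambda>i. real ((a + b + 2*i) choose (a+i)) * p^(a+i) * (1-p)^(b+i))"
    by (rule sums_summable)
  have sv: "(\<Sum>i. real ((a + b + 2*i) choose (a+i)) * pp^(a+i) * (1-pp)^(b+i)) = s"
    using sums unfolding pp by (simp add: sums_iff)
  have d0: "2*pp - 1 > 0" using hp by simp
  have e: "s - (1/4)/(pp - 1/2) = (((\<Sum>j<a. B j) + B a - 1/2) + Sec) / (2*pp-1)"
  proof -
    have q: "(1/4)/(pp - 1/2) = (1/2)/(2*pp-1)" using d0 by (simp add: field_simps)
    have g: "\<And>X. X/(2*pp-1) - (1/2)/(2*pp-1) = (X - 1/2)/(2*pp-1)" by (simp add: diff_divide_distrib)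
    show ?thesis unfolding s_def q g by (intro arg_cong[where f="\<lambda>x. x/(2*pp-1)"]) simp
  qed
  have A: "\<bar>(\<Sum>j<a. B j) + B a - 1/2\<bar> \<le>
           (real K * (real K^2/real b^2 + 2/real b) + Tail K + B a) / 2"
    by (rule sym_bound[OF K1 Kb])
  have T: "Tail K \<le> real b / real K^2" using K1 by (intro Tail_bound) auto
  have M: "B a \<le> 2 / (real K' + 1)" by (rule mode_bound[OF K'])
  have S: "0 \<le> Sec" "Sec \<le> B a / (1 - rho)" using Sec_bound by auto
  have r: "0 < 1 - rho" using rho_props by simp
  have S2: "Sec \<le> (2 / (real K' + 1)) / (1 - rho)"
    using S(2) M r by (smt (verit) divide_right_mono)
  have "\<bar>((\<Sum>j<a. B j) + B a - 1/2) + Sec\<bar> \<le> \<bar>(\<Sum>j<a. B j) + B a - 1/2\<bar> + Sec"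
    using S(1) by (simp add: abs_triangle_ineq[THEN order_trans])
  also have "... \<le> (real K * (real K^2/real b^2 + 2/real b) + real b/real K^2 + 2/(real K'+1))/2
             + (2/(real K'+1))/(1 - rho)"
    by (rule lin_helper[OF A T M S2])
  finally have "\<bar>s - (1/4)/(pp - 1/2)\<bar> \<le> ((real K * (real K^2/real b^2 + 2/real b) + real b/real K^2 + 2/(real K'+1))/2
             + (2/(real K'+1))/(1 - rho)) / (2*pp-1)"
    unfolding e abs_divide using d0 by (simp add: divide_right_mono)
  then show "\<bar>(\<Sum>i. real ((a + b + 2*i) choose (a+i)) * p^(a+i) * (1-p)^(b+i)) - (1/4)/(p - 1/2)\<bar>
        \<le> ((real K * (real K^2/real b^2 + 2/real b) + real b/real K^2 + 2/(real K'+1))/2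
             + (2/(real K'+1))/(1 - ((1-p)/p)^2)) / (2*p-1)"
    unfolding pp sv rho_def .
qed

lemma asymp1: "((\<lambda>y::real. (y powr (3/5))^3/y^2 + 2*(y powr (3/5))/y + y/(y powr (3/5) - 1)^2 + 4/sqrt y) \<longlongrightarrow> 0) at_top"
  by real_asymp

lemma asymp2: "((\<lambda>y::real. 4/sqrt y) \<longlongrightarrow> 0) at_top"
  by real_asymp

lemma floor_bounds:
  fixes x :: real assumes "0 \<le> x"
  shows "real (nat \<lfloor>x\<rfloor>) \<le> x" "x - 1 < real (nat \<lfloor>x\<rfloor>)"
proof -
  have "0 \<le> \<lfloor>x\<rfloor>" using assms by simp
  hence e: "real (nat \<lfloor>x\<rfloor>) = real_of_int \<lfloor>x\<rfloor>" by simp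
  show "real (nat \<lfloor>x\<rfloor>) \<le> x" unfolding e by simp
  show "x - 1 < real (nat \<lfloor>x\<rfloor>)" unfolding e by linarith
qed


lemma sum5_mono:
  fixes a1 a2 a3 a4 a5 b1 b2 b3 b4 b5 :: real
  shows "a1 \<le> b1 \<Longrightarrow> a2 \<le> b2 \<Longrightarrow> a3 \<le> b3 \<Longrightarrow> a4 \<le> b4 \<Longrightarrow> a5 \<le> b5 \<Longrightarrow>
    (a1+a2+a3+a4)/2 + a5 \<le> (b1+b2+b3+b4)/2 + b5"
  by argo

theorem corollary3:
  fixes k1 k2 :: nat and p :: real
  assumes "k1 > k2" and "k2 > 0"
    and "p = real k1 / real (k1 + k2)"
  shows "(\<lambda>t::nat. \<Sum>i. real ((t*k1 + t*k2 + 2*i) choose (t*k1 + i))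
            * p ^ (t*k1 + i) * (1 - p) ^ (t*k2 + i))
         \<longlonglongrightarrow> (1/4) / (p - 1/2)"
proof -
  define f where "f t = (\<Sum>i. real ((t*k1 + t*k2 + 2*i) choose (t*k1 + i))
            * p ^ (t*k1 + i) * (1 - p) ^ (t*k2 + i))" for t :: nat
  define L where "L = (1/4) / (p - 1/2)"
  define \<rho> where "\<rho> = ((1-p)/p)^2"
  define y where "y t = real (t*k2)" for t :: nat
  define \<Phi> where "\<Phi> x = (((x powr (3/5))^3/x^2 + 2*(x powr (3/5))/x + x/(x powr (3/5) - 1)^2 + 4/sqrt x)/2
                       + (4/sqrt x)/(1-\<rho>)) / (2*p-1)" for x :: real
  have kk: "real k2 < real k1" "0 < real k2" using assms by auto
  have hp: "1/2 < p" "p < 1"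
    unfolding assms(3) using kk by (simp_all add: field_simps)
  have r1: "0 \<le> \<rho>" "\<rho> < 1"
  proof -
    show "0 \<le> \<rho>" unfolding \<rho>_def by simp
    have "0 \<le> (1-p)/p" "(1-p)/p < 1" using hp by (auto simp: field_simps)
    then show "\<rho> < 1" unfolding \<rho>_def by (simp add: power_less_one_iff abs_square_less_1)
  qed
  have bound: "\<bar>f t - L\<bar> \<le> \<Phi> (y t)" if t: "t \<ge> 2" for t
  proof -
    define a where "a = t*k1"
    define b where "b = t*k2"
    define x where "x = y t"
    have xb: "x = real b" unfolding x_def y_def b_def ..
    have b0: "0 < b" and ba: "b < a" using t assms unfolding a_def b_def by auto
    have "2 * 1 \<le> t * k2" using t assms(2) by (intro mult_le_mono) auto
    hence "real (2 * 1) \<le> real (t * k2)" by (simp only: of_nat_le_iff)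
    hence x2: "x \<ge> 2" unfolding xb b_def by simp
    have pa: "real a / real (a+b) = p"
    proof -
      have "real a / real (a+b) = (real t * real k1) / (real t * real (k1+k2))"
        unfolding a_def b_def by (simp add: algebra_simps)
      also have "... = p" using t assms(3) by simp
      finally show ?thesis .
    qed
    define z where "z = x powr (3/5)"
    define K where "K = nat \<lfloor>z\<rfloor>"
    define K' where "K' = nat \<lfloor>sqrt x / 2\<rfloor>"
    have z1: "1 < z" unfolding z_def using x2 by (intro gr_one_powr) auto
    have zx: "z \<le> x" unfolding z_def using powr_mono[of "3/5" 1 x] x2 by simp
    have Kz: "real K \<le> z" "z - 1 < real K" unfolding K_def using z1 floor_bounds[of z] by auto
    have K1: "1 \<le> K" using Kz z1 unfolding K_def by linarith
    have Kb: "K \<le> b" using Kz zx xb by linarith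
    have sx: "0 \<le> sqrt x / 2" using x2 by simp
    have K'b: "real K' \<le> sqrt x / 2" "sqrt x / 2 - 1 < real K'"
      unfolding K'_def using floor_bounds[OF sx] by auto
    have "real (4*K'^2) \<le> real b"
    proof -
      have "real K'^2 \<le> (sqrt x / 2)^2" using K'b(1) by (intro power_mono) auto
      also have "... = x / 4" using x2 by (simp add: power_divide)
      finally show ?thesis using xb by simp
    qed
    hence K': "4*K'^2 \<le> b" by (simp only: of_nat_le_iff)
    have main: "\<bar>f t - L\<bar> \<le> ((real K * (real K^2/real b^2 + 2/real b) + real b/real K^2 + 2/(real K'+1))/2
             + (2/(real K'+1))/(1 - \<rho>)) / (2*p-1)"
      using per_t(2)[OF b0 ba K1 Kb K', unfolded pa] unfolding f_def L_def \<rho>_def a_def b_def .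
    have e1: "real K * (real K^2/real b^2 + 2/real b) = real K^3/x^2 + 2*real K/x"
      using xb x2 by (simp add: field_simps power2_eq_square power3_eq_cube)
    have i1: "real K^3/x^2 \<le> z^3/x^2" using Kz by (intro divide_right_mono power_mono) auto
    have i2: "2*real K/x \<le> 2*z/x" using Kz x2 by (intro divide_right_mono) auto
    have i3: "real b/real K^2 \<le> x/(z-1)^2"
    proof -
      have "(z-1)^2 \<le> real K^2" using Kz z1 by (intro power_mono) auto
      moreover have "0 < (z-1)^2" using z1 by simp
      moreover have "0 < real K^2" using K1 by simp
      ultimately show ?thesis unfolding xb[symmetric] using x2 by (intro divide_left_mono) (auto intro: mult_pos_pos)
    qed
    have i4: "2/(real K'+1) \<le> 4/sqrt x"
    proof -
      have "sqrt x / 2 \<le> real K' + 1" using K'b by linarith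
      moreover have "0 < sqrt x / 2" using x2 by simp
      ultimately have "2/(real K'+1) \<le> 2/(sqrt x / 2)" by (intro divide_left_mono) auto
      then show ?thesis by simp
    qed
    have i5: "(2/(real K'+1))/(1 - \<rho>) \<le> (4/sqrt x)/(1 - \<rho>)"
      using i4 r1 by (intro divide_right_mono) auto
    have "((real K * (real K^2/real b^2 + 2/real b) + real b/real K^2 + 2/(real K'+1))/2
             + (2/(real K'+1))/(1 - \<rho>)) \<le>
          ((z^3/x^2 + 2*z/x + x/(z-1)^2 + 4/sqrt x)/2 + (4/sqrt x)/(1-\<rho>))"
      unfolding e1 by (rule sum5_mono[OF _ i2 i3 i4 i5]) (use i1 in simp)
    hence "((real K * (real K^2/real b^2 + 2/real b) + real b/real K^2 + 2/(real K'+1))/2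
             + (2/(real K'+1))/(1 - \<rho>)) / (2*p-1) \<le> \<Phi> x"
      unfolding \<Phi>_def z_def using hp by (intro divide_right_mono) auto
    then show ?thesis using main unfolding x_def by linarith
  qed
  have ylim: "filterlim y at_top sequentially"
  proof -
    have "filterlim (\<lambda>t. real t * real k2) at_top sequentially"
      using assms(2) by (intro filterlim_at_top_mult_tendsto_pos[OF tendsto_const] filterlim_real_sequentially) auto
    then show ?thesis unfolding y_def by (simp add: mult.commute)
  qed
  have Phi0: "(\<Phi> \<longlongrightarrow> 0) at_top"
  proof -
    have "((\<lambda>x. (((x powr (3/5))^3/x^2 + 2*(x powr (3/5))/x + x/(x powr (3/5) - 1)^2 + 4/sqrt x)/2
                       + (4/sqrt x)/(1-\<rho>)) / (2*p-1)) \<longlongrightarrow> ((0/2 + 0/(1-\<rho>))/(2*p-1))) at_top"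
      by (intro tendsto_intros asymp1 asymp2) (use r1 hp in auto)
    then show ?thesis unfolding \<Phi>_def by simp
  qed
  have lim: "((\<lambda>t. \<Phi> (y t)) \<longlongrightarrow> 0) sequentially"
    by (rule filterlim_compose[OF Phi0 ylim])
  have ev: "eventually (\<lambda>t. norm (f t - L) \<le> \<Phi> (y t)) sequentially"
    using bound by (intro eventually_sequentiallyI[of 2]) simp
  have "((\<lambda>t. f t - L) \<longlongrightarrow> 0) sequentially"
    by (rule Lim_null_comparison[OF ev lim])
  hence "f \<longlonglongrightarrow> L" by (rule LIM_zero_cancel)
  then show ?thesis unfolding f_def L_def .
qed

end
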